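(* For $n\ge2$, consider the IID instance in which each of the $n$ actions independently has a good type with (receiver, sender) values $(1,1)$ with probability $1/n$ and a bad type with values $(0,0)$ with probability $1-1/n$. Then for every $k\in\{2,\dots,n\}$, $\operatorname{OPT}_k\le\frac{e}{e-1}\cdot\frac kn\cdot\operatorname{OPT}_n$.
   Context: Bayesian persuasion: receiver chooses one of actions $[n]$; the sender observes the state (types of all actions) and sends one of $k$ signals according to a committed scheme; the receiver picks an action maximizing her conditional expected value given the signal, ties broken in favor of the sender. $\operatorname{OPT}_k$ denotes the maximal expected sender utility over all schemes with $k$ signals. *)

theory Defs
  imports Complex_Main
begin

text \<open>A signaling scheme with k signals: phi w s = probability of sending signal s (s < k) in state w.\<close>

definition is_scheme :: "'w set \<Rightarrow> nat \<Rightarrow> ('w \<Rightarrow> nat \<Rightarrow> real) \<Rightarrow> bool" where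
  "is_scheme Omega k phi \<longleftrightarrow>
     (\<forall>w\<in>Omega. (\<forall>s<k. phi w s \<ge> 0) \<and> (\<Sum>s<k. phi w s) = 1)"

text \<open>Unnormalised conditional expectation: Pr[signal s] * E[v(w,i) | signal s].\<close>
definition sig_val :: "'w set \<Rightarrow> ('w \<Rightarrow> real) \<Rightarrow> ('w \<Rightarrow> nat \<Rightarrow> real) \<Rightarrow>
    ('w \<Rightarrow> 'a \<Rightarrow> real) \<Rightarrow> nat \<Rightarrow> 'a \<Rightarrow> real" where
  "sig_val Omega mu phi v s i = (\<Sum>w\<in>Omega. mu w * phi w s * v w i)"

definition best_resp :: "'w set \<Rightarrow> ('w \<Rightarrow> real) \<Rightarrow> 'a set \<Rightarrow> ('w \<Rightarrow> 'a \<Rightarrow> real) \<Rightarrow>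
    ('w \<Rightarrow> nat \<Rightarrow> real) \<Rightarrow> nat \<Rightarrow> 'a set" where
  "best_resp Omega mu A vR phi s =
     {i\<in>A. \<forall>j\<in>A. sig_val Omega mu phi vR s j \<le> sig_val Omega mu phi vR s i}"

text \<open>Sender's expected utility, ties broken in favour of the sender.\<close>
definition sender_util :: "'w set \<Rightarrow> ('w \<Rightarrow> real) \<Rightarrow> 'a set \<Rightarrow> ('w \<Rightarrow> 'a \<Rightarrow> real) \<Rightarrow>
    ('w \<Rightarrow> 'a \<Rightarrow> real) \<Rightarrow> nat \<Rightarrow> ('w \<Rightarrow> nat \<Rightarrow> real) \<Rightarrow> real" where
  "sender_util Omega mu A vR vS k phi =
     (\<Sum>s<k. Max (sig_val Omega mu phi vS s ` best_resp Omega mu A vR phi s))"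

definition OPT :: "'w set \<Rightarrow> ('w \<Rightarrow> real) \<Rightarrow> 'a set \<Rightarrow> ('w \<Rightarrow> 'a \<Rightarrow> real) \<Rightarrow>
    ('w \<Rightarrow> 'a \<Rightarrow> real) \<Rightarrow> nat \<Rightarrow> real" where
  "OPT Omega mu A vR vS k =
     Sup (sender_util Omega mu A vR vS k ` {phi. is_scheme Omega k phi})"

text \<open>The IID instance: actions {0..<n}; a state is the set G of good actions;
  each action is good independently with probability 1/n; good = (1,1), bad = (0,0).\<close>
definition iid_states :: "nat \<Rightarrow> nat set set" where
  "iid_states n = Pow {..<n}"

definition iid_prior :: "nat \<Rightarrow> nat set \<Rightarrow> real" where
  "iid_prior n G = (1 / real n) ^ card G * (1 - 1 / real n) ^ (n - card G)"

definition iid_val :: "nat set \<Rightarrow> nat \<Rightarrow> real" where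
  "iid_val G i = (if i \<in> G then 1 else 0)"

definition OPT_iid :: "nat \<Rightarrow> nat \<Rightarrow> real" where
  "OPT_iid n k = OPT (iid_states n) (iid_prior n) {..<n} iid_val iid_val k"

end

theory Submission
  imports Defs
begin

lemma binom_pow_sum:
  fixes p q :: real
  assumes "finite A"
  shows "(\<Sum>X\<in>Pow A. p ^ card X * q ^ (card A - card X)) = (p + q) ^ card A"
proof -
  have "(p + q) ^ card A = (\<Prod>x\<in>A. p + q)" by simp
  also have "\<dots> = (\<Sum>X\<in>Pow A. (\<Prod>x\<in>X. p) * (\<Prod>x\<in>A-X. q))"
    by (rule prod_add[OF assms])
  also have "\<dots> = (\<Sum>X\<in>Pow A. p ^ card X * q ^ (card A - card X))"
  proof (rule sum.cong)
    fix X assume "X \<in> Pow A"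
    then have "X \<subseteq> A" by auto
    then have "card (A - X) = card A - card X"
      using assms by (meson card_Diff_subset finite_subset)
    then show "(\<Prod>x\<in>X. p) * (\<Prod>x\<in>A-X. q) = p ^ card X * q ^ (card A - card X)"
      by simp
  qed simp
  finally show ?thesis by simp
qed

lemma total_prob:
  assumes "n \<ge> 1"
  shows "(\<Sum>G\<in>iid_states n. iid_prior n G) = 1"
  using binom_pow_sum[of "{..<n}" "1 / real n" "1 - 1 / real n"]
  by (simp add: iid_states_def iid_prior_def)

lemma marginal:
  assumes "n \<ge> 1" and "i < n"
  shows "(\<Sum>G\<in>{G\<in>iid_states n. i \<in> G}. iid_prior n G) = 1 / real n"
proof -
  let ?p = "1 / real n" and ?q = "1 - 1 / real n"
  let ?B = "{..<n} - {i}"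
  have cB: "card ?B = n - 1" using assms by simp
  have eq: "{G\<in>iid_states n. i \<in> G} = insert i ` Pow ?B"
  proof
    show "{G\<in>iid_states n. i \<in> G} \<subseteq> insert i ` Pow ?B"
    proof
      fix G assume "G \<in> {G\<in>iid_states n. i \<in> G}"
      then have "G \<subseteq> {..<n}" "i \<in> G" by (auto simp: iid_states_def)
      then have "G = insert i (G - {i})" "G - {i} \<in> Pow ?B" by auto
      then show "G \<in> insert i ` Pow ?B" by blast
    qed
  next
    show "insert i ` Pow ?B \<subseteq> {G\<in>iid_states n. i \<in> G}"
      using assms by (auto simp: iid_states_def)
  qed
  have inj: "inj_on (insert i) (Pow ?B)"
    by (rule inj_onI) (metis Diff_insert_absorb PowD subset_Diff_insert)
  have "(\<Sum>G\<in>{G\<in>iid_states n. i \<in> G}. iid_prior n G)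
      = (\<Sum>H\<in>Pow ?B. iid_prior n (insert i H))"
    unfolding eq by (rule sum.reindex[OF inj, unfolded comp_def])
  also have "\<dots> = (\<Sum>H\<in>Pow ?B. ?p * (?p ^ card H * ?q ^ (card ?B - card H)))"
  proof (rule sum.cong)
    fix H assume H: "H \<in> Pow ?B"
    then have fin: "finite H" by (meson PowD finite_Diff finite_lessThan finite_subset)
    have "i \<notin> H" using H by auto
    then have c: "card (insert i H) = Suc (card H)" using fin by simp
    have "card H \<le> card ?B" using H by (simp add: card_mono)
    then have "n - card (insert i H) = card ?B - card H" using c cB by simp
    then show "iid_prior n (insert i H) = ?p * (?p ^ card H * ?q ^ (card ?B - card H))"
      unfolding iid_prior_def using c by simp
  qed simp
  also have "\<dots> = ?p * (\<Sum>H\<in>Pow ?B. ?p ^ card H * ?q ^ (card ?B - card H))"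
    by (rule sum_distrib_left[symmetric])
  also have "\<dots> = ?p * (?p + ?q) ^ card ?B"
    using binom_pow_sum[of ?B ?p ?q] by simp
  finally show ?thesis by simp
qed

lemma prior_nonneg: "n \<ge> 1 \<Longrightarrow> iid_prior n G \<ge> 0"
  unfolding iid_prior_def by simp

lemma max_term_eq:
  fixes v :: "'w \<Rightarrow> 'a \<Rightarrow> real"
  assumes "finite A" "A \<noteq> {}"
  shows "Max (sig_val Omega mu phi v s ` best_resp Omega mu A v phi s)
       = Max (sig_val Omega mu phi v s ` A)"
proof -
  let ?f = "sig_val Omega mu phi v s"
  have "Max (?f ` A) \<in> ?f ` A" using assms by simp
  then obtain i where i: "i \<in> A" "?f i = Max (?f ` A)" by auto
  have ge: "\<And>j. j \<in> A \<Longrightarrow> ?f j \<le> Max (?f ` A)" using assms by simp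
  have br: "best_resp Omega mu A v phi s = {j\<in>A. ?f j = Max (?f ` A)}"
    unfolding best_resp_def using i ge by (auto intro: antisym) (metis antisym)
  have "?f ` best_resp Omega mu A v phi s = {Max (?f ` A)}"
    unfolding br using i by auto
  then show ?thesis by simp
qed

lemma util_upper:
  assumes "n \<ge> 1" and "is_scheme (iid_states n) k phi"
  shows "sender_util (iid_states n) (iid_prior n) {..<n} iid_val iid_val k phi \<le> real k / real n"
proof -
  have ne: "{..<n} \<noteq> {}" using assms(1) by (simp add: lessThan_empty_iff)
  have "\<And>s. s < k \<Longrightarrow> Max (sig_val (iid_states n) (iid_prior n) phi iid_val s ` {..<n}) \<le> 1 / real n"
  proof -
    fix s assume s: "s < k"
    show "Max (sig_val (iid_states n) (iid_prior n) phi iid_val s ` {..<n}) \<le> 1 / real n"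
    proof (subst Max_le_iff, simp, simp add: ne, clarify)
      fix i assume i: "i < n"
      have "sig_val (iid_states n) (iid_prior n) phi iid_val s i
          = (\<Sum>G\<in>iid_states n. iid_prior n G * phi G s * iid_val G i)"
        by (simp add: sig_val_def)
      also have "\<dots> \<le> (\<Sum>G\<in>iid_states n. if i \<in> G then iid_prior n G else 0)"
      proof (rule sum_mono)
        fix G assume G: "G \<in> iid_states n"
        have p0: "phi G s \<ge> 0" and sm: "(\<Sum>t<k. phi G t) = 1"
          using assms(2) G s unfolding is_scheme_def by auto
        have "phi G s \<le> (\<Sum>t<k. phi G t)"
          by (rule member_le_sum) (use assms(2) G s in \<open>auto simp: is_scheme_def\<close>)
        then have p1: "phi G s \<le> 1" using sm by simp
        have "iid_prior n G * phi G s \<le> iid_prior n G"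
          using prior_nonneg[OF assms(1)] p1 by (simp add: mult_left_le)
        then show "iid_prior n G * phi G s * iid_val G i \<le> (if i \<in> G then iid_prior n G else 0)"
          by (simp add: iid_val_def)
      qed
      also have "\<dots> = (\<Sum>G\<in>{G\<in>iid_states n. i \<in> G}. iid_prior n G)"
        by (rule sum.inter_filter[symmetric]) (simp add: iid_states_def)
      also have "\<dots> = 1 / real n" by (rule marginal[OF assms(1) i])
      finally show "sig_val (iid_states n) (iid_prior n) phi iid_val s i \<le> 1 / real n" .
    qed
  qed
  then have "(\<Sum>s<k. Max (sig_val (iid_states n) (iid_prior n) phi iid_val s ` {..<n}))
      \<le> (\<Sum>s<k. 1 / real n)"
    by (intro sum_mono) simp
  then show ?thesis
    unfolding sender_util_def by (simp add: max_term_eq[OF _ ne])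
qed

definition full :: "nat set \<Rightarrow> nat \<Rightarrow> real" where
  "full G s = (if G \<noteq> {} then (if s = Min G then 1 else 0) else (if s = 0 then 1 else 0))"

lemma full_scheme:
  assumes "n \<ge> 1"
  shows "is_scheme (iid_states n) n full"
  unfolding is_scheme_def
proof (intro ballI conjI allI impI)
  fix G s assume "G \<in> iid_states n" "s < n"
  show "full G s \<ge> 0" by (simp add: full_def)
next
  fix G assume G: "G \<in> iid_states n"
  show "(\<Sum>s<n. full G s) = 1"
  proof (cases "G = {}")
    case True then show ?thesis using assms by (simp add: full_def)
  next
    case False
    have fin: "finite G" using G by (auto simp: iid_states_def intro: finite_subset)
    have "Min G \<in> G" using fin False by simp
    then have "Min G < n" using G by (auto simp: iid_states_def)
    then show ?thesis using False by (simp add: full_def)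
  qed
qed

lemma full_util:
  assumes "n \<ge> 1"
  shows "sender_util (iid_states n) (iid_prior n) {..<n} iid_val iid_val n full
     \<ge> 1 - (1 - 1 / real n) ^ n"
proof -
  have ne: "{..<n} \<noteq> {}" using assms(1) by (simp add: lessThan_empty_iff)
  let ?f = "\<lambda>s. sig_val (iid_states n) (iid_prior n) full iid_val s"
  have inner: "\<And>G. G \<in> iid_states n \<Longrightarrow>
      (\<Sum>s<n. full G s * iid_val G s) = (if G = {} then 0 else 1)"
  proof -
    fix G assume G: "G \<in> iid_states n"
    show "(\<Sum>s<n. full G s * iid_val G s) = (if G = {} then 0 else 1)"
    proof (cases "G = {}")
      case True then show ?thesis by (simp add: iid_val_def)
    next
      case False
      have fin: "finite G" using G by (auto simp: iid_states_def intro: finite_subset)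
      have m: "Min G \<in> G" using fin False by simp
      then have "Min G < n" using G by (auto simp: iid_states_def)
      have "(\<Sum>s<n. full G s * iid_val G s) = (\<Sum>s<n. if s = Min G then 1 else 0)"
        by (rule sum.cong) (use m False in \<open>auto simp: full_def iid_val_def\<close>)
      then show ?thesis using False \<open>Min G < n\<close> by simp
    qed
  qed
  have "(\<Sum>s<n. ?f s s) = (\<Sum>s<n. \<Sum>G\<in>iid_states n. iid_prior n G * (full G s * iid_val G s))"
    by (simp add: sig_val_def mult.assoc)
  also have "\<dots> = (\<Sum>G\<in>iid_states n. \<Sum>s<n. iid_prior n G * (full G s * iid_val G s))"
    by (rule sum.swap)
  also have "\<dots> = (\<Sum>G\<in>iid_states n. iid_prior n G * (if G = {} then 0 else 1))"
    by (rule sum.cong) (simp_all add: sum_distrib_left[symmetric] inner)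
  also have "\<dots> = (\<Sum>G\<in>iid_states n. iid_prior n G) - iid_prior n {}"
  proof -
    have fin: "finite (iid_states n)" by (simp add: iid_states_def)
    have e: "{} \<in> iid_states n" by (simp add: iid_states_def)
    have "(\<Sum>G\<in>iid_states n. iid_prior n G) = iid_prior n {} + (\<Sum>G\<in>iid_states n - {{}}. iid_prior n G)"
      using sum.remove[OF fin e] by simp
    moreover have "(\<Sum>G\<in>iid_states n. iid_prior n G * (if G = {} then 0 else 1))
        = (\<Sum>G\<in>iid_states n - {{}}. iid_prior n G)"
      using sum.remove[OF fin e, of "\<lambda>G. iid_prior n G * (if G = {} then 0 else 1)"]
      by (simp add: sum.cong[OF refl, of "iid_states n - {{}}" "\<lambda>G. iid_prior n G * (if G = {} then 0 else 1)" "iid_prior n"])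
    ultimately show ?thesis by simp
  qed
  also have "\<dots> = 1 - (1 - 1 / real n) ^ n"
    using total_prob[OF assms] by (simp add: iid_prior_def)
  finally have eq: "(\<Sum>s<n. ?f s s) = 1 - (1 - 1 / real n) ^ n" .
  have "(\<Sum>s<n. ?f s s) \<le> (\<Sum>s<n. Max (?f s ` {..<n}))"
    by (intro sum_mono Max_ge) auto
  then show ?thesis
    unfolding sender_util_def eq[symmetric] by (simp add: max_term_eq[OF _ ne])
qed

lemma exp_bound:
  assumes "n \<ge> 1"
  shows "(1 - 1 / real n) ^ n \<le> exp (-1)"
proof -
  have "0 \<le> 1 - 1 / real n" using assms by simp
  moreover have "1 - 1 / real n \<le> exp (- (1 / real n))"
    using exp_ge_add_one_self[of "- (1 / real n)"] by simp
  ultimately have "(1 - 1 / real n) ^ n \<le> exp (- (1 / real n)) ^ n"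
    by (simp add: power_mono)
  also have "\<dots> = exp (real n * (- (1 / real n)))"
    by (rule exp_of_nat_mult[symmetric])
  also have "\<dots> = exp (-1)" using assms by simp
  finally show ?thesis .
qed

theorem lemma5p2:
  fixes n k :: nat
  assumes "n \<ge> 2" and "2 \<le> k" and "k \<le> n"
  shows "OPT_iid n k \<le> exp 1 / (exp 1 - 1) * (real k / real n) * OPT_iid n n"
proof -
  have n1: "n \<ge> 1" using assms by simp
  let ?U = "\<lambda>k. sender_util (iid_states n) (iid_prior n) {..<n} iid_val iid_val k"
  define zero :: "nat set \<Rightarrow> nat \<Rightarrow> real" where "zero = (\<lambda>G s. if s = 0 then 1 else 0)"
  have "is_scheme (iid_states n) k zero"
    using assms unfolding is_scheme_def zero_def by simp
  then have nek: "?U k ` {phi. is_scheme (iid_states n) k phi} \<noteq> {}" by blast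
  have OPTk: "OPT_iid n k \<le> real k / real n"
    unfolding OPT_iid_def OPT_def
    by (rule cSup_least[OF nek]) (auto intro: util_upper[OF n1])
  have bdd: "bdd_above (?U n ` {phi. is_scheme (iid_states n) n phi})"
  proof (rule bdd_aboveI[where M = "real n / real n"])
    fix x assume "x \<in> ?U n ` {phi. is_scheme (iid_states n) n phi}"
    then obtain phi where "is_scheme (iid_states n) n phi" "x = ?U n phi" by blast
    then show "x \<le> real n / real n" using util_upper[OF n1, of n phi] by simp
  qed
  have "?U n full \<le> OPT_iid n n"
    unfolding OPT_iid_def OPT_def
    by (rule cSup_upper[OF _ bdd]) (simp add: full_scheme[OF n1])
  then have OPTn: "1 - exp (-1) \<le> OPT_iid n n"
    using full_util[OF n1] exp_bound[OF n1] by linarith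
  have e1: "exp 1 > (1::real)" by simp
  have em: "exp (-1) = 1 / exp (1::real)" by (simp add: exp_minus field_simps)
  have c: "exp 1 / (exp 1 - 1) * (1 - exp (-1)) = (1::real)"
    using e1 unfolding em by (simp add: field_simps)
  have kn: "real k / real n \<ge> 0" by simp
  have pos: "exp 1 / (exp 1 - 1) > (0::real)" using e1 by simp
  have "real k / real n = exp 1 / (exp 1 - 1) * (real k / real n) * (1 - exp (-1))"
    using c by (simp add: mult.commute mult.left_commute)
  also have "\<dots> \<le> exp 1 / (exp 1 - 1) * (real k / real n) * OPT_iid n n"
    using OPTn pos kn by (intro mult_left_mono) auto
  finally show ?thesis using OPTk by linarith
qed

end
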